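(* Let $j,r\in\mathbb{N}$. Then for all $n\in\mathbb{N}$: $c_j^{(r-1)}(n)\le c_j^{(r)}(n)$; in particular $c_j(n)\le c_j^{(r)}(n)$; and moreover $c_j^{(r)}(n)\le d_{j+r}(n)$.
   Context: For $j,n\in\mathbb{N}$, $d_j(n)$ is the number of ordered $j$-tuples of positive integers with product $n$, and $c_j(n)$ is the number of ordered $j$-tuples of integers each $\ge 2$ with product $n$. The associated divisor functions are defined by $c_j^{(0)}=c_j$ and $c_j^{(r)}(n)=\sum_{m\mid n}c_j^{(r-1)}(m)$ for $r,n\in\mathbb{N}$. *)

theory Defs
  imports Main
begin

text \<open>Ordered j-tuples are represented as lists of length j.\<close>

definition d_fun :: "nat \<Rightarrow> nat \<Rightarrow> nat" where
  "d_fun j n = card {xs :: nat list. length xs = j \<and> (\<forall>x\<in>set xs. x \<ge> 1) \<and> prod_list xs = n}"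

definition c_fun :: "nat \<Rightarrow> nat \<Rightarrow> nat" where
  "c_fun j n = card {xs :: nat list. length xs = j \<and> (\<forall>x\<in>set xs. x \<ge> 2) \<and> prod_list xs = n}"

fun c_iter :: "nat \<Rightarrow> nat \<Rightarrow> nat \<Rightarrow> nat" where
  "c_iter j 0 n = c_fun j n"
| "c_iter j (Suc r) n = (\<Sum>m | m dvd n. c_iter j r m)"

end

theory Submission
  imports Defs
begin

definition DS :: "nat \<Rightarrow> nat \<Rightarrow> nat list set" where
  "DS k n = {xs :: nat list. length xs = k \<and> (\<forall>x\<in>set xs. x \<ge> 1) \<and> prod_list xs = n}"

lemma finite_DS:
  assumes "n \<ge> 1" shows "finite (DS k n)"
proof (rule finite_subset)
  show "DS k n \<subseteq> {xs. set xs \<subseteq> {..n} \<and> length xs = k}"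
  proof
    fix xs assume "xs \<in> DS k n"
    then have l: "length xs = k" and p: "prod_list xs = n" by (auto simp: DS_def)
    have "set xs \<subseteq> {..n}"
    proof
      fix x assume "x \<in> set xs"
      then have "x dvd n" using p prod_list_dvd by blast
      then show "x \<in> {..n}" using assms by (auto intro: dvd_imp_le)
    qed
    then show "xs \<in> {xs. set xs \<subseteq> {..n} \<and> length xs = k}" using l by auto
  qed
  show "finite {xs. set xs \<subseteq> {..n} \<and> length xs = k}"
    by (rule finite_lists_length_eq) simp
qed

lemma c_le_d: assumes "n \<ge> 1" shows "c_fun j n \<le> d_fun j n"
proof -
  have "{xs :: nat list. length xs = j \<and> (\<forall>x\<in>set xs. x \<ge> 2) \<and> prod_list xs = n} \<subseteq> DS j n"
    by (auto simp: DS_def)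
  then show ?thesis unfolding c_fun_def d_fun_def DS_def[symmetric]
    using finite_DS[OF assms] card_mono by blast
qed

lemma d_step: assumes "n \<ge> 1"
  shows "(\<Sum>m | m dvd n. d_fun k m) \<le> d_fun (Suc k) n"
proof -
  have fA: "finite {m. m dvd n}" using assms by simp
  have fB: "\<forall>m\<in>{m. m dvd n}. finite (DS k m)"
    using assms by (auto intro!: finite_DS simp: Suc_le_eq intro: Nat.gr0I)
  have "(\<Sum>m | m dvd n. d_fun k m) = card (SIGMA m:{m. m dvd n}. DS k m)"
    using card_SigmaI[OF fA fB] by (simp add: d_fun_def DS_def)
  also have "\<dots> \<le> card (DS (Suc k) n)"
  proof (rule card_inj_on_le)
    show "inj_on (\<lambda>(m, xs). (n div m) # xs) (SIGMA m:{m. m dvd n}. DS k m)"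
      by (auto simp: inj_on_def DS_def)
    show "(\<lambda>(m, xs). (n div m) # xs) ` (SIGMA m:{m. m dvd n}. DS k m) \<subseteq> DS (Suc k) n"
    proof clarify
      fix m xs assume "m dvd n" "xs \<in> DS k m"
      then show "(n div m) # xs \<in> DS (Suc k) n" using assms
        by (auto simp: DS_def Suc_le_eq elim!: dvdE)
    qed
    show "finite (DS (Suc k) n)" using finite_DS[OF assms] .
  qed
  finally show ?thesis by (simp add: d_fun_def DS_def)
qed

lemma mono_step: assumes "n \<ge> 1" shows "c_iter j r n \<le> c_iter j (Suc r) n"
proof -
  have "finite {m. m dvd n}" using assms by simp
  moreover have "n \<in> {m. m dvd n}" by simp
  ultimately have "c_iter j r n \<le> (\<Sum>m | m dvd n. c_iter j r m)"
    by (metis (no_types, lifting) member_le_sum zero_le)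
  then show ?thesis by simp
qed

lemma c_le_iter: assumes "n \<ge> 1" shows "c_fun j n \<le> c_iter j r n"
  using assms
proof (induction r)
  case 0 then show ?case by simp
next
  case (Suc r) then show ?case using mono_step[of n j r] by simp
qed

lemma iter_le_d: "n \<ge> 1 \<Longrightarrow> c_iter j r n \<le> d_fun (j + r) n"
proof (induction r arbitrary: n)
  case 0 then show ?case using c_le_d by simp
next
  case (Suc r)
  have "c_iter j (Suc r) n = (\<Sum>m | m dvd n. c_iter j r m)" by simp
  also have "\<dots> \<le> (\<Sum>m | m dvd n. d_fun (j + r) m)"
  proof (rule sum_mono)
    fix m assume "m \<in> {m. m dvd n}"
    then have "m \<ge> 1" using Suc.prems by (auto simp: Suc_le_eq intro: Nat.gr0I)
    then show "c_iter j r m \<le> d_fun (j + r) m" by (rule Suc.IH)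
  qed
  also have "\<dots> \<le> d_fun (Suc (j + r)) n" by (rule d_step[OF Suc.prems])
  finally show ?case by simp
qed

theorem lemma16:
  fixes j r n :: nat
  assumes "j \<ge> 1" and "r \<ge> 1" and "n \<ge> 1"
  shows "c_iter j (r - 1) n \<le> c_iter j r n \<and> c_fun j n \<le> c_iter j r n
         \<and> c_iter j r n \<le> d_fun (j + r) n"
proof -
  obtain s where r: "r = Suc s" using assms(2) by (cases r) auto
  have a: "c_iter j s n \<le> c_iter j (Suc s) n" by (rule mono_step[OF assms(3)])
  have b: "c_fun j n \<le> c_iter j (Suc s) n" by (rule c_le_iter[OF assms(3)])
  have c: "c_iter j (Suc s) n \<le> d_fun (j + Suc s) n" by (rule iter_le_d[OF assms(3)])
  show ?thesis using a b c unfolding r by simp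
qed

end
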